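(* Consider one group of $p'$ PEs holding locally sorted string arrays with concatenation $S'$, partitioned into $r$ buckets using character-based regular sampling with sampling factor $v>0$. Then every bucket $B^j$ contains at most $\bigl(1+\frac rv\bigr)\frac{\|S'\|}{r}+\bigl(1+\frac{v+1}{r}\bigr)p'\hat{\ell}$ characters.
   Context: $\hat{\ell}$ is the length of the longest string and $\|X\|$ the number of characters of a set of strings $X$; $r$ divides $p'$. Character-based regular sampling with factor $v$: with $\omega'=\|S'\|/(p'(v+1))$, PE $i$ (holding sorted array $S_i'$) draws $\lceil\|S_i'\|/\omega'\rceil-1$ equally spaced positions in its character array, shifts each position by at most $\hat{\ell}-1$ to the beginning of the string containing it, and takes these strings as samples; if fewer than $p'(v+1)$ samples result, the first PEs draw one additional sample each. The samples $V$ are sorted and splitters $f_j=V[j|V|/r-1]$ for $0<j<r$ are chosen, $f_0=-\infty$, $f_r=\infty$. Buckets are $B^j=\bigcup_i\{s\in S_i':f_j<s\le f_{j+1}\}$. *)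

theory Defs
  imports Complex_Main "HOL-Library.List_Lexorder"
begin

text \<open>Strings are lists over a linearly ordered alphabet, compared lexicographically
  (List_Lexorder). A PE's local array is a list of strings.\<close>

definition chars :: "'a list list \<Rightarrow> nat" where
  "chars X = sum_list (map length X)"

definition maxlen :: "'a list list \<Rightarrow> nat" where
  "maxlen X = Max (insert 0 (set (map length X)))"

fun str_at :: "'a list list \<Rightarrow> nat \<Rightarrow> 'a list" where
  "str_at [] n = []"
| "str_at (s # ss) n = (if n < length s then s else str_at ss (n - length s))"

definition concat_all :: "nat \<Rightarrow> (nat \<Rightarrow> 'a list list) \<Rightarrow> 'a list list" where
  "concat_all p S = concat (map S [0..<p])"

definition omega :: "nat \<Rightarrow> nat \<Rightarrow> (nat \<Rightarrow> 'a list list) \<Rightarrow> real" where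
  "omega p v S = real (chars (concat_all p S)) / (real p * (real v + 1))"

definition num_reg :: "real \<Rightarrow> 'a list list \<Rightarrow> nat" where
  "num_reg w Si = nat (\<lceil>real (chars Si) / w\<rceil> - 1)"

text \<open>Regular samples of one PE: positions floor(m * omega') for m = 1 .. ceil(||S_i||/omega') - 1,
  each shifted to the beginning of the string containing it.\<close>
definition reg_samples :: "real \<Rightarrow> 'a list list \<Rightarrow> 'a list list" where
  "reg_samples w Si = map (\<lambda>m. str_at Si (nat \<lfloor>real m * w\<rfloor>)) [1..<num_reg w Si + 1]"

definition all_reg_samples :: "nat \<Rightarrow> nat \<Rightarrow> (nat \<Rightarrow> 'a list list) \<Rightarrow> 'a list list" where
  "all_reg_samples p v S = concat (map (\<lambda>i. reg_samples (omega p v S) (S i)) [0..<p])"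

text \<open>Number of PEs (the first ones) drawing one additional sample.\<close>
definition num_extra :: "nat \<Rightarrow> nat \<Rightarrow> (nat \<Rightarrow> 'a list list) \<Rightarrow> nat" where
  "num_extra p v S = min (p * (v + 1) - length (all_reg_samples p v S)) p"

text \<open>The sorted sample array V; extra i is the additional sample of PE i.\<close>
definition samples :: "nat \<Rightarrow> nat \<Rightarrow> (nat \<Rightarrow> 'a::linorder list list) \<Rightarrow> (nat \<Rightarrow> 'a list)
    \<Rightarrow> 'a list list" where
  "samples p v S extra =
     sort (all_reg_samples p v S @ map extra [0..<num_extra p v S])"

text \<open>Membership in bucket j: f_j < s <= f_(j+1) with f_j = V[j |V|/r - 1],
  f_0 = -infinity, f_r = +infinity.\<close>
definition in_bucket :: "'a::linorder list list \<Rightarrow> nat \<Rightarrow> nat \<Rightarrow> 'a list \<Rightarrow> bool" where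
  "in_bucket V r j s =
     ((0 < j \<longrightarrow> V ! (j * (length V div r) - 1) < s) \<and>
      (j + 1 < r \<longrightarrow> s \<le> V ! ((j + 1) * (length V div r) - 1)))"

definition bucket_chars :: "nat \<Rightarrow> nat \<Rightarrow> nat \<Rightarrow> (nat \<Rightarrow> 'a::linorder list list)
    \<Rightarrow> (nat \<Rightarrow> 'a list) \<Rightarrow> nat \<Rightarrow> nat" where
  "bucket_chars p v r S extra j =
     (\<Sum>i<p. chars (filter (in_bucket (samples p v S extra) r j) (S i)))"

end

theory Submission
  imports Defs
begin
lemma chars_append[simp]: "chars (xs @ ys) = chars xs + chars ys"
  by (simp add: chars_def)
lemma chars_Cons[simp]: "chars (x # ys) = length x + chars ys"
  by (simp add: chars_def)
lemma chars_Nil[simp]: "chars [] = 0"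
  by (simp add: chars_def)

lemma chars_filter_le: "chars (filter P xs) \<le> chars xs"
  by (induction xs) auto

lemma chars_filter_or:
  assumes "\<And>x. P x \<Longrightarrow> Q1 x \<or> Q2 x"
  shows "chars (filter P xs) \<le> chars (filter Q1 xs) + chars (filter Q2 xs)"
  using assms by (induction xs) auto

lemma str_at_append2: "chars as \<le> n \<Longrightarrow> str_at (as @ ys) n = str_at ys (n - chars as)"
  by (induction as arbitrary: n) (auto simp: diff_diff_add)

lemma str_at_in: "n < chars ys \<Longrightarrow> str_at (ys @ zs) n \<in> set ys"
  by (induction ys arbitrary: n) auto

lemma split_convex:
  fixes xs :: "'a::linorder list"
  assumes "sorted xs" and cv: "\<And>a b x. Q a \<Longrightarrow> Q b \<Longrightarrow> a \<le> x \<Longrightarrow> x \<le> b \<Longrightarrow> Q x"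
  shows "\<exists>as bs cs. xs = as @ bs @ cs \<and> (\<forall>x\<in>set bs. Q x) \<and> (\<forall>x\<in>set as. \<not> Q x)
     \<and> (\<forall>x\<in>set cs. \<not> Q x)"
proof -
  define as where "as = takeWhile (\<lambda>x. \<not> Q x) xs"
  define rest where "rest = dropWhile (\<lambda>x. \<not> Q x) xs"
  define bs where "bs = takeWhile Q rest"
  define cs where "cs = dropWhile Q rest"
  have xs: "xs = as @ bs @ cs" by (simp add: as_def rest_def bs_def cs_def)
  have A: "\<forall>x\<in>set as. \<not> Q x" by (auto simp: as_def dest: set_takeWhileD)
  have B: "\<forall>x\<in>set bs. Q x" by (auto simp: bs_def dest: set_takeWhileD)
  have C: "\<forall>x\<in>set cs. \<not> Q x"
  proof (cases cs)
    case Nil then show ?thesis by simp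
  next
    case (Cons z cs')
    have rne: "rest \<noteq> []" using Cons cs_def by auto
    have "Q (hd rest)" using rne unfolding rest_def by (metis hd_dropWhile)
    then have bne: "bs \<noteq> []" using rne unfolding bs_def by (metis list.collapse takeWhile.simps(2) list.simps(3))
    then obtain b where b: "b \<in> set bs" by (metis list.set_sel(1))
    have nz: "\<not> Q z" using Cons unfolding cs_def by (metis hd_dropWhile list.sel(1) list.simps(3))
    have srt: "sorted (bs @ z # cs')" using assms(1) xs Cons by (metis sorted_append)
    show ?thesis
    proof
      fix y assume y: "y \<in> set cs"
      show "\<not> Q y"
      proof
        assume Qy: "Q y"
        have bz: "b \<le> z" using srt b by (auto simp: sorted_append)
        have "y = z \<or> (y \<in> set cs' \<and> z \<le> y)" using y Cons srt by (auto simp: sorted_append)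
        then show False using cv[OF _ Qy bz] B b nz Qy by auto
      qed
    qed
  qed
  show ?thesis using xs A B C by blast
qed

lemma key:
  fixes xs :: "'a::linorder list list"
  assumes "sorted xs" and cv: "\<And>a b x. Q a \<Longrightarrow> Q b \<Longrightarrow> a \<le> x \<Longrightarrow> x \<le> b \<Longrightarrow> Q x"
    and w: "0 < w"
  shows "real (chars (filter Q xs)) \<le> (real (length (filter Q (reg_samples w xs))) + 1) * w"
proof -
  obtain as bs cs where xs: "xs = as @ bs @ cs" and B: "\<forall>x\<in>set bs. Q x"
    and A: "\<forall>x\<in>set as. \<not> Q x" and C: "\<forall>x\<in>set cs. \<not> Q x"
    using split_convex[OF assms(1), of Q] cv by blast
  have fq: "filter Q xs = bs" using xs A B C by simp
  define k where "k = num_reg w xs"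
  define Al where "Al = chars as"
  define L where "L = chars bs"
  define a where "a = max 1 (nat \<lceil>real Al / w\<rceil>)"
  define b where "b = nat \<lceil>real (Al + L) / w\<rceil>"
  define P where "P = (\<lambda>m. Q (str_at xs (nat \<lfloor>real m * w\<rfloor>)))"
  have cx: "chars xs = Al + L + chars cs" by (simp add: xs Al_def L_def)
  have sub: "{a..<b} \<subseteq> set (filter P [1..<k+1])"
  proof
    fix m assume m: "m \<in> {a..<b}"
    have am: "a \<le> m" using m by simp
    have m1: "1 \<le> m" using am unfolding a_def by linarith
    have "nat \<lceil>real Al / w\<rceil> \<le> m" using am unfolding a_def by linarith
    then have "\<lceil>real Al / w\<rceil> \<le> int m" by linarith
    then have "real Al / w \<le> real m" by (simp add: ceiling_le_iff)
    then have lo: "real Al \<le> real m * w" using w by (simp add: divide_le_eq)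
    have "m < b" using m by simp
    then have "int m < \<lceil>real (Al + L) / w\<rceil>" unfolding b_def by linarith
    then have "real m < real (Al + L) / w" by (simp add: less_ceiling_iff)
    then have hi: "real m * w < real (Al + L)" using w by (simp add: less_divide_eq)
    define n where "n = nat \<lfloor>real m * w\<rfloor>"
    have f0: "0 \<le> \<lfloor>real m * w\<rfloor>" using w by simp
    have "int Al \<le> \<lfloor>real m * w\<rfloor>" using lo by (simp add: le_floor_iff)
    then have n1: "Al \<le> n" unfolding n_def using f0 by (simp add: le_nat_iff)
    have "\<lfloor>real m * w\<rfloor> < int (Al + L)" using hi by (simp add: floor_less_iff)
    then have n2: "n < Al + L" unfolding n_def using f0 by (simp add: nat_less_iff)
    have e1: "str_at xs n = str_at (bs @ cs) (n - Al)" unfolding xs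
      using str_at_append2[of as n "bs @ cs"] n1 unfolding Al_def by blast
    have "n - Al < chars bs" using n1 n2 L_def by linarith
    then have "str_at (bs @ cs) (n - Al) \<in> set bs" by (rule str_at_in)
    then have "Q (str_at xs n)" using e1 B by simp
    then have "P m" using P_def n_def by simp
    moreover have "m \<le> k"
    proof -
      have "real m * w < real (chars xs)" using hi cx by simp
      then have "real m < real (chars xs) / w" using w by (simp add: less_divide_eq)
      then have "int m < \<lceil>real (chars xs) / w\<rceil>" by (simp add: less_ceiling_iff)
      then show ?thesis unfolding k_def num_reg_def by linarith
    qed
    ultimately show "m \<in> set (filter P [1..<k+1])" using m1 by (auto simp del: upt_Suc)
  qed
  have len: "length (filter Q (reg_samples w xs)) = length (filter P [1..<k+1])"
    by (simp add: reg_samples_def filter_map k_def P_def o_def)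
  have "b - a = card {a..<b}" by simp
  also have "\<dots> \<le> card (set (filter P [1..<k+1]))" by (rule card_mono[OF _ sub]) simp
  also have "\<dots> = length (filter P [1..<k+1])" by (rule distinct_card) (simp del: upt_Suc)
  finally have ba: "b - a \<le> length (filter Q (reg_samples w xs))" using len by simp
  have ra: "real a \<le> real Al / w + 1"
  proof (cases "\<lceil>real Al / w\<rceil> \<le> 1")
    case True
    then have "a = 1" unfolding a_def by auto
    moreover have "0 \<le> real Al / w" using w by simp
    ultimately show ?thesis by simp
  next
    case False
    then have "a = nat \<lceil>real Al / w\<rceil>" unfolding a_def by auto
    then have "real a = real_of_int \<lceil>real Al / w\<rceil>" using False by simp
    then show ?thesis by linarith
  qed
  have rb: "real (Al + L) / w \<le> real b"
  proof -
    have x0: "0 \<le> real (Al + L) / w" using w by simp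
    then have "0 \<le> \<lceil>real (Al + L) / w\<rceil>" by simp
    then have "real b = real_of_int \<lceil>real (Al + L) / w\<rceil>" unfolding b_def by simp
    then show ?thesis using le_of_int_ceiling[of "real (Al + L) / w"] by linarith
  qed
  have "real L / w - 1 \<le> real b - real a" using ra rb by (simp add: add_divide_distrib)
  also have "\<dots> \<le> real (b - a)" by simp
  also have "\<dots> \<le> real (length (filter Q (reg_samples w xs)))" using ba by simp
  finally have "real L / w \<le> real (length (filter Q (reg_samples w xs))) + 1" by simp
  then have "real L \<le> (real (length (filter Q (reg_samples w xs))) + 1) * w"
    using w by (simp add: divide_le_eq)
  then show ?thesis using fq L_def by simp
qed

lemma sum_upt: "sum_list (map f [0..<p]) = (\<Sum>i<p. f i)"
  by (simp add: interv_sum_list_conv_sum_set_nat atLeast0LessThan)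

lemma chars_filter_concat:
  "chars (filter P (concat_all p S)) = (\<Sum>i<p. chars (filter P (S i)))"
  unfolding concat_all_def by (induction p) auto

lemma chars_eq_le_maxlen:
  assumes "distinct xs"
  shows "chars (filter (\<lambda>s. s = t) xs) \<le> maxlen xs"
proof (cases "t \<in> set xs")
  case True
  have "filter (\<lambda>s. s = t) xs = [t]" using assms True
    by (induction xs) (auto simp: filter_empty_conv)
  moreover have "length t \<le> maxlen xs" unfolding maxlen_def using True by simp
  ultimately show ?thesis by simp
next
  case False
  then have "filter (\<lambda>s. s = t) xs = []" by (auto simp: filter_empty_conv)
  then show ?thesis by simp
qed

lemma num_reg_bounds:
  assumes "0 < w"
  shows "real (num_reg w xs) \<le> real (chars xs) / w"
    and "real (chars xs) / w - 1 \<le> real (num_reg w xs)"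
proof -
  define x where "x = real (chars xs) / w"
  have x0: "0 \<le> x" using assms x_def by simp
  show "real (num_reg w xs) \<le> real (chars xs) / w"
  proof (cases "x = 0")
    case True then show ?thesis unfolding num_reg_def x_def[symmetric] by simp
  next
    case False
    then have "0 < x" using x0 by simp
    then have "1 \<le> \<lceil>x\<rceil>" by (simp add: le_ceiling_iff)
    then have "real (num_reg w xs) = real_of_int \<lceil>x\<rceil> - 1" unfolding num_reg_def x_def[symmetric] by simp
    then show ?thesis using ceiling_less_iff[of x "\<lceil>x\<rceil>"] x_def by linarith
  qed
  have "real_of_int (\<lceil>x\<rceil> - 1) \<le> real (num_reg w xs)" unfolding num_reg_def x_def[symmetric] by linarith
  then show "real (chars xs) / w - 1 \<le> real (num_reg w xs)" using le_of_int_ceiling[of x] x_def by simp linarith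
qed

lemma length_reg_samples: "length (reg_samples w xs) = num_reg w xs"
  by (simp add: reg_samples_def)

lemma arith0: fixes X R C :: real assumes "X \<noteq> 0" shows "(X/R) * (C/X) = C/R"
  using assms by (simp add: field_simps)
lemma arith1: fixes P R V C :: real assumes "P > 0" "R > 0" "V \<ge> 0"
  shows "(P*(V+1)/R + P) * (C/(P*(V+1))) = C/R + C/(V+1)"
proof -
  have n1: "P \<noteq> 0" "R \<noteq> 0" "V + 1 \<noteq> 0" "P*(V+1) \<noteq> 0" using assms by auto
  have "(P*(V+1)/R + P) * (C/(P*(V+1))) = (P*(V+1)/R) * (C/(P*(V+1))) + P * (C/(P*(V+1)))"
    by (rule distrib_right)
  also have "(P*(V+1)/R) * (C/(P*(V+1))) = C/R" by (rule arith0[OF n1(4)])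
  also have "P * (C/(P*(V+1))) = C/(V+1)" using n1 by (simp add: field_simps)
  finally show ?thesis .
qed

theorem theorem18:
  fixes p v r :: nat
    and S :: "nat \<Rightarrow> 'a::linorder list list"
    and extra :: "nat \<Rightarrow> 'a list"
    and j :: nat
  assumes "0 < p" and "0 < r" and "r dvd p" and "0 < v"
    and "\<And>i. i < p \<Longrightarrow> sorted (S i)"
    and "distinct (concat_all p S)"
    and "\<And>i. i < num_extra p v S \<Longrightarrow> extra i \<in> set (S i)"
    and "j < r"
  shows "real (bucket_chars p v r S extra j)
    \<le> (1 + real r / real v) * real (chars (concat_all p S)) / real r
       + (1 + (real v + 1) / real r) * real p * real (maxlen (concat_all p S))"
proof -
  define C where "C = chars (concat_all p S)"
  define Lmax where "Lmax = maxlen (concat_all p S)"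
  have Csum: "C = (\<Sum>i<p. chars (S i))"
    using chars_filter_concat[of "\<lambda>_. True" p S] unfolding C_def by simp
  have rhs0: "0 \<le> (1 + real r / real v) * real C / real r
       + (1 + (real v + 1) / real r) * real p * real Lmax" by simp
  have bleC: "bucket_chars p v r S extra j \<le> C"
    unfolding bucket_chars_def Csum by (rule sum_mono) (rule chars_filter_le)
  show ?thesis
  proof (cases "C = 0")
    case True
    then show ?thesis using bleC rhs0 unfolding C_def Lmax_def by simp
  next
    case False
    define w where "w = omega p v S"
    have w: "w = real C / (real p * (real v + 1))" unfolding w_def omega_def C_def by simp
    have wpos: "0 < w" unfolding w using False \<open>0 < p\<close> by simp
    define N where "N = length (all_reg_samples p v S)"
    have N: "N = (\<Sum>i<p. num_reg w (S i))"
      unfolding N_def all_reg_samples_def w_def[symmetric]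
      by (simp add: length_concat o_def length_reg_samples sum_upt)
    have "real N \<le> (\<Sum>i<p. real (chars (S i)) / w)"
      unfolding N of_nat_sum by (rule sum_mono) (rule num_reg_bounds(1)[OF wpos])
    also have "\<dots> = real C / w" unfolding Csum of_nat_sum by (simp add: sum_divide_distrib)
    also have "\<dots> = real p * (real v + 1)" unfolding w using False \<open>0 < p\<close> by simp
    finally have Nup: "real N \<le> real p * (real v + 1)" .
    have "(\<Sum>i<p. real (chars (S i)) / w - 1) \<le> real N"
      unfolding N of_nat_sum by (rule sum_mono) (rule num_reg_bounds(2)[OF wpos])
    moreover have "(\<Sum>i<p. real (chars (S i)) / w - 1) = real C / w - real p"
      unfolding Csum of_nat_sum by (simp add: sum_subtractf sum_divide_distrib)
    moreover have "real C / w = real p * (real v + 1)" unfolding w using False \<open>0 < p\<close> by simp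
    ultimately have Nlo: "real p * (real v + 1) - real p \<le> real N" by simp
    have "real N \<le> real (p * (v + 1))" using Nup by (simp add: algebra_simps)
    then have N1: "N \<le> p * (v + 1)" by (simp only: of_nat_le_iff)
    have N2: "p * (v + 1) - N \<le> p"
    proof -
      have "real (p * (v + 1)) \<le> real N + real p" using Nlo by (simp add: algebra_simps)
      then show ?thesis by linarith
    qed
    define V where "V = samples p v S extra"
    have lenV: "length V = p * (v + 1)"
      using N1 N2 unfolding V_def samples_def num_extra_def N_def by simp
    define d where "d = length V div r"
    obtain q where pq: "p = r * q" using \<open>r dvd p\<close> by blast
    have d: "d = q * (v + 1)" unfolding d_def lenV pq using \<open>0 < r\<close> by simp
    have rd: "length V = r * d" unfolding lenV d pq by (simp add: algebra_simps)
    have srtV: "sorted V" unfolding V_def samples_def by simp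
    define Q where "Q = (\<lambda>s. (0 < j \<longrightarrow> V ! (j * d - 1) < s) \<and> (j + 1 < r \<longrightarrow> s < V ! ((j + 1) * d - 1)))"
    define t where "t = V ! ((j + 1) * d - 1)"
    have cv: "\<And>a b x. Q a \<Longrightarrow> Q b \<Longrightarrow> a \<le> x \<Longrightarrow> x \<le> b \<Longrightarrow> Q x"
      unfolding Q_def by (meson less_le_trans le_less_trans)
    have ib: "\<And>s. in_bucket V r j s \<Longrightarrow> Q s \<or> s = t"
      unfolding in_bucket_def Q_def t_def d_def by auto
    have step1: "bucket_chars p v r S extra j \<le>
        (\<Sum>i<p. chars (filter Q (S i))) + (\<Sum>i<p. chars (filter (\<lambda>s. s = t) (S i)))"
      unfolding bucket_chars_def V_def[symmetric] sum.distrib[symmetric]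
      by (rule sum_mono) (rule chars_filter_or, rule ib)
    have step2: "(\<Sum>i<p. chars (filter (\<lambda>s. s = t) (S i))) \<le> Lmax"
      unfolding chars_filter_concat[symmetric] Lmax_def
      by (rule chars_eq_le_maxlen) (rule assms(6))
    have step3: "real (\<Sum>i<p. chars (filter Q (S i)))
        \<le> (\<Sum>i<p. (real (length (filter Q (reg_samples w (S i)))) + 1) * w)"
      unfolding of_nat_sum by (rule sum_mono) (rule key[OF assms(5) cv wpos], simp)
    have "(\<Sum>i<p. length (filter Q (reg_samples w (S i)))) = length (filter Q (all_reg_samples p v S))"
      unfolding all_reg_samples_def w_def
      by (simp add: filter_concat length_concat o_def sum_upt)
    also have "\<dots> \<le> length (filter Q V)"
    proof -
      have "length (filter Q V) = length (filter Q (all_reg_samples p v S @ map extra [0..<num_extra p v S]))"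
        unfolding V_def samples_def by (simp add: filter_sort)
      then show ?thesis by simp
    qed
    also have "\<dots> \<le> d"
    proof -
      have "{i. i < length V \<and> Q (V ! i)} \<subseteq> {j * d..<(j + 1) * d}"
      proof
        fix i assume i: "i \<in> {i. i < length V \<and> Q (V ! i)}"
        then have il: "i < length V" and qi: "Q (V ! i)" by auto
        have "j * d \<le> i"
        proof (rule ccontr)
          assume "\<not> j * d \<le> i"
          then have "0 < j" by (cases "j = 0") auto
          moreover have "i \<le> j * d - 1" using \<open>\<not> j * d \<le> i\<close> by linarith
          moreover have "j * d - 1 < length V"
          proof -
            have "j * d \<le> r * d" using \<open>j < r\<close> by simp
            then show ?thesis using rd \<open>\<not> j * d \<le> i\<close> by linarith
          qed
          ultimately have "V ! i \<le> V ! (j * d - 1)" using sorted_nth_mono[OF srtV] by blast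
          then show False using qi \<open>0 < j\<close> unfolding Q_def by auto
        qed
        moreover have "i < (j + 1) * d"
        proof (cases "j + 1 < r")
          case True
          show ?thesis
          proof (rule ccontr)
            assume "\<not> i < (j + 1) * d"
            then have "(j + 1) * d - 1 \<le> i" by simp
            then have "V ! ((j + 1) * d - 1) \<le> V ! i" using sorted_nth_mono[OF srtV] il by blast
            then show False using qi True unfolding Q_def by auto
          qed
        next
          case False
          then have "j + 1 = r" using \<open>j < r\<close> by simp
          then show ?thesis using il rd by (simp add: mult.commute)
        qed
        ultimately show "i \<in> {j * d..<(j + 1) * d}" by simp
      qed
      then have "card {i. i < length V \<and> Q (V ! i)} \<le> card {j * d..<(j + 1) * d}"
        by (rule card_mono[rotated]) simp
      then show ?thesis by (simp add: length_filter_conv_card)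
    qed
    finally have step4: "(\<Sum>i<p. length (filter Q (reg_samples w (S i)))) \<le> d" .
    have "(\<Sum>i<p. (real (length (filter Q (reg_samples w (S i)))) + 1) * w)
        = (real (\<Sum>i<p. length (filter Q (reg_samples w (S i)))) + real p) * w"
      by (simp add: sum.distrib sum_distrib_right[symmetric] of_nat_sum)
    also have "\<dots> \<le> (real d + real p) * w"
    proof -
      have "real (\<Sum>i<p. length (filter Q (reg_samples w (S i)))) \<le> real d" using step4 by (simp only: of_nat_le_iff)
      then show ?thesis using wpos by (intro mult_right_mono add_right_mono) auto
    qed
    finally have s34: "real (\<Sum>i<p. chars (filter Q (S i))) \<le> (real d + real p) * w" using step3 by linarith
    have real_d: "real d = real p * (real v + 1) / real r"
      using rd lenV \<open>0 < r\<close> by (metis nonzero_mult_div_cancel_left of_nat_0_less_iff of_nat_add of_nat_mult of_nat_1 less_irrefl of_nat_eq_0_iff) 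
    have "(real d + real p) * w = real C / real r + real C / (real v + 1)"
      unfolding real_d w using \<open>0 < p\<close> \<open>0 < r\<close> by (intro arith1) auto
    also have "\<dots> \<le> real C / real r + real C / real v"
      using \<open>0 < v\<close> by (simp add: frac_le)
    also have "\<dots> = (1 + real r / real v) * real C / real r"
      using \<open>0 < r\<close> \<open>0 < v\<close> by (simp add: field_simps)
    finally have A: "real (\<Sum>i<p. chars (filter Q (S i))) \<le> (1 + real r / real v) * real C / real r"
      using s34 by linarith
    have B: "real Lmax \<le> (1 + (real v + 1) / real r) * real p * real Lmax"
    proof -
      have h1: "1 \<le> 1 + (real v + 1) / real r" by simp
      have h2: "1 \<le> real p" using \<open>0 < p\<close> by simp
      have "1 \<le> (1 + (real v + 1) / real r) * real p"
        using mult_mono[OF h1 h2] by simp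
      then show ?thesis using mult_right_mono[of 1 "(1 + (real v + 1) / real r) * real p" "real Lmax"] by simp
    qed
    have "real (bucket_chars p v r S extra j) \<le> real (\<Sum>i<p. chars (filter Q (S i))) + real Lmax"
      using step1 step2 by linarith
    then show ?thesis using A B unfolding C_def Lmax_def by linarith
  qed
qed

end
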